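(* Let $\mathcal{A}$ be a line arrangement in $\mathbb{P}^2_{\mathbb{C}}$ with $|\mathcal{A}|=7$. Then $\mathcal{A}$ is of class $\mathcal{C}_{\le 3}$ of simple type.
   Context: $\operatorname{mult}(\mathcal{A})$ is the set of points on at least three lines of $\mathcal{A}$. $\mathcal{A}$ is of type $\mathcal{C}_k$ if $k$ is the minimal number of lines of $\mathcal{A}$ whose union contains $\operatorname{mult}(\mathcal{A})$. "$\mathcal{C}_{\le 3}$ of simple type" means of type $\mathcal{C}_0,\mathcal{C}_1,\mathcal{C}_2$, or of type $\mathcal{C}_3$ such that there exist $H_1,H_2,H_3\in\mathcal{A}$ with $\operatorname{mult}(\mathcal{A})\subset H_1\cup H_2\cup H_3$ and either (i) $H_1\cap H_2\cap H_3=\emptyset$ and exactly one multiple point lies on $H_1\setminus(H_2\cup H_3)$, or (ii) $H_1\cap H_2\cap H_3\ne\emptyset$. *)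

theory Defs
  imports "HOL-Analysis.Analysis"
begin

text \<open>The complex projective plane: a point is a one-dimensional subspace of
  complex^3, represented as the set of its vectors (the span of a nonzero vector).\<close>

definition proj_points :: "(complex^3) set set" where
  "proj_points = {{c *s v | c. True} | v. v \<noteq> 0}"

definition pair3 :: "complex^3 \<Rightarrow> complex^3 \<Rightarrow> complex" where
  "pair3 a x = (\<Sum>i\<in>UNIV. a $ i * x $ i)"

definition proj_line :: "complex^3 \<Rightarrow> (complex^3) set set" where
  "proj_line a = {P \<in> proj_points. \<forall>x\<in>P. pair3 a x = 0}"

definition is_proj_line :: "(complex^3) set set \<Rightarrow> bool" where
  "is_proj_line L \<longleftrightarrow> (\<exists>a. a \<noteq> 0 \<and> L = proj_line a)"

definition line_arrangement :: "(complex^3) set set set \<Rightarrow> bool" where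
  "line_arrangement A \<longleftrightarrow> finite A \<and> (\<forall>L\<in>A. is_proj_line L)"

definition mult_pts :: "(complex^3) set set set \<Rightarrow> (complex^3) set set" where
  "mult_pts A = {P \<in> proj_points. card {H \<in> A. P \<in> H} \<ge> 3}"

text \<open>A is of type C_k: k is the minimal number of lines of A whose union contains mult(A).\<close>
definition arr_type :: "(complex^3) set set set \<Rightarrow> nat" where
  "arr_type A = (LEAST k. \<exists>B \<subseteq> A. card B = k \<and> mult_pts A \<subseteq> \<Union>B)"

definition C_le3_simple :: "(complex^3) set set set \<Rightarrow> bool" where
  "C_le3_simple A \<longleftrightarrow>
     arr_type A \<le> 2 \<or>
     (arr_type A = 3 \<and>
      (\<exists>H1\<in>A. \<exists>H2\<in>A. \<exists>H3\<in>A. H1 \<noteq> H2 \<and> H1 \<noteq> H3 \<and> H2 \<noteq> H3 \<and>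
         mult_pts A \<subseteq> H1 \<union> H2 \<union> H3 \<and>
         ((H1 \<inter> H2 \<inter> H3 = {} \<and> card (mult_pts A \<inter> (H1 - (H2 \<union> H3))) = 1)
          \<or> H1 \<inter> H2 \<inter> H3 \<noteq> {})))"

end

theory Submission
  imports Defs
begin


lemma core:
  fixes a1 a2 a3 b1 b2 b3 x1 x2 x3 :: complex
  assumes "x1 \<noteq> 0" "a2 * x1 = a1 * x2" "a3 * x1 = a1 * x3" "b2 * x1 = b1 * x2" "b3 * x1 = b1 * x3"
    "\<not>(b1 = 0 \<and> b2 = 0 \<and> b3 = 0)"
  shows "\<exists>c. a1 = c * b1 \<and> a2 = c * b2 \<and> a3 = c * b3"
proof -
  have b1: "b1 \<noteq> 0" using assms by auto
  have "a2 = a1 * x2/x1" "a3 = a1 * x3/x1" "b2 = b1 * x2/x1" "b3 = b1 * x3/x1"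
    using assms by (auto simp: field_simps)
  then show ?thesis using b1 by (intro exI[of _ "a1/b1"]) (auto simp: field_simps)
qed

lemma alg:
  fixes a1 a2 a3 b1 b2 b3 v1 v2 v3 w1 w2 w3 :: complex
  assumes av: "a1 * v1+a2 * v2+a3 * v3=0" and aw: "a1 * w1+a2 * w2+a3 * w3=0"
    and bv: "b1 * v1+b2 * v2+b3 * v3=0" and bw: "b1 * w1+b2 * w2+b3 * w3=0"
    and b0: "\<not>(b1 = 0 \<and> b2 = 0 \<and> b3 = 0)"
    and v0: "\<not>(v1 = 0 \<and> v2 = 0 \<and> v3 = 0)"
    and np: "\<not>(\<exists>k. w1 = k * v1 \<and> w2 = k * v2 \<and> w3 = k * v3)"
  shows "\<exists>c. a1 = c * b1 \<and> a2 = c * b2 \<and> a3 = c * b3"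
proof -
  define n1 where "n1 = v2 * w3 - v3 * w2"
  define n2 where "n2 = v3 * w1 - v1 * w3"
  define n3 where "n3 = v1 * w2 - v2 * w1"
  have n0: "\<not>(n1 = 0 \<and> n2 = 0 \<and> n3 = 0)"
  proof
    assume h: "n1 = 0 \<and> n2 = 0 \<and> n3 = 0"
    have "\<exists>k. w1 = k * v1 \<and> w2 = k * v2 \<and> w3 = k * v3"
    proof (cases "v1 = 0")
      case False
      show ?thesis using h False unfolding n1_def n2_def n3_def
        by (intro exI[of _ "w1/v1"]) (auto simp: field_simps)
    next
      case v1: True
      show ?thesis
      proof (cases "v2 = 0")
        case False
        show ?thesis using h False v1 unfolding n1_def n2_def n3_def
          by (intro exI[of _ "w2/v2"]) (auto simp: field_simps)
      next
        case True
        then have "v3 \<noteq> 0" using v0 v1 by auto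
        then show ?thesis using h True v1 unfolding n1_def n2_def n3_def
          by (intro exI[of _ "w3/v3"]) (auto simp: field_simps)
      qed
    qed
    with np show False by blast
  qed
  have e: "\<And>p1 p2 p3 :: complex. p1 * v1+p2 * v2+p3 * v3=0 \<Longrightarrow> p1 * w1+p2 * w2+p3 * w3=0 \<Longrightarrow>
     p2 * n3 = p3 * n2 \<and> p3 * n1 = p1 * n3 \<and> p1 * n2 = p2 * n1"
  proof -
    fix p1 p2 p3 :: complex
    assume h1: "p1 * v1+p2 * v2+p3 * v3=0" and h2: "p1 * w1+p2 * w2+p3 * w3=0"
    have "p2 * n3 - p3 * n2 = v1*(p1 * w1+p2 * w2+p3 * w3) - w1*(p1 * v1+p2 * v2+p3 * v3)"
      "p3 * n1 - p1 * n3 = v2*(p1 * w1+p2 * w2+p3 * w3) - w2*(p1 * v1+p2 * v2+p3 * v3)"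
      "p1 * n2 - p2 * n1 = v3*(p1 * w1+p2 * w2+p3 * w3) - w3*(p1 * v1+p2 * v2+p3 * v3)"
      unfolding n1_def n2_def n3_def by (simp_all add: algebra_simps)
    then show "p2 * n3 = p3 * n2 \<and> p3 * n1 = p1 * n3 \<and> p1 * n2 = p2 * n1" using h1 h2 by simp
  qed
  have ea: "a2 * n3 = a3 * n2" "a3 * n1 = a1 * n3" "a1 * n2 = a2 * n1" using e[OF av aw] by auto
  have eb: "b2 * n3 = b3 * n2" "b3 * n1 = b1 * n3" "b1 * n2 = b2 * n1" using e[OF bv bw] by auto
  consider "n1 \<noteq> 0" | "n2 \<noteq> 0" | "n3 \<noteq> 0" using n0 by blast
  then show ?thesis
  proof cases
    case 1
    show ?thesis using core[of n1 a2 a1 n2 a3 n3 b2 b1 b3] 1 ea eb b0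
      by (auto simp: mult.commute)
  next
    case 2
    from core[of n2 a1 a2 n1 a3 n3 b1 b2 b3] 2 ea eb b0 obtain c where
      "a2 = c * b2 \<and> a1 = c * b1 \<and> a3 = c * b3" by (auto simp: mult.commute)
    then show ?thesis by blast
  next
    case 3
    from core[of n3 a1 a3 n1 a2 n2 b1 b3 b2] 3 ea eb b0 obtain c where
      "a3 = c * b3 \<and> a1 = c * b1 \<and> a2 = c * b2" by (auto simp: mult.commute)
    then show ?thesis by blast
  qed
qed

lemma pair3_eq: "pair3 a x = a$1 * x$1 + a$2 * x$2 + a$3 * x$3"
  by (simp add: pair3_def sum_3)

lemma vec3_eq0: "(x::complex^3) = 0 \<longleftrightarrow> x$1 = 0 \<and> x$2 = 0 \<and> x$3 = 0"
  by (auto simp: vec_eq_iff forall_3)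

lemma point_rep: "X \<in> proj_points \<Longrightarrow> \<exists>v. v \<noteq> 0 \<and> X = {c *s v | c. True}"
  by (auto simp: proj_points_def)

lemma incidence:
  assumes "is_proj_line L1" "is_proj_line L2" "L1 \<noteq> L2"
    "X \<in> L1" "X \<in> L2" "Y \<in> L1" "Y \<in> L2"
  shows "X = Y"
proof (rule ccontr)
  assume XY: "X \<noteq> Y"
  obtain a where a: "a \<noteq> 0" "L1 = proj_line a" using assms(1) by (auto simp: is_proj_line_def)
  obtain b where b: "b \<noteq> 0" "L2 = proj_line b" using assms(2) by (auto simp: is_proj_line_def)
  have Xp: "X \<in> proj_points" using assms(4) a by (auto simp: proj_line_def)
  have Yp: "Y \<in> proj_points" using assms(6) a by (auto simp: proj_line_def)
  obtain v where v: "v \<noteq> 0" "X = {c *s v | c. True}" using point_rep[OF Xp] by blast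
  obtain w where w: "w \<noteq> 0" "Y = {c *s w | c. True}" using point_rep[OF Yp] by blast
  have vX: "v \<in> X" using v by (auto intro!: exI[of _ 1])
  have wY: "w \<in> Y" using w by (auto intro!: exI[of _ 1])
  have av: "pair3 a v = 0" using assms(4) vX a by (auto simp: proj_line_def)
  have aw: "pair3 a w = 0" using assms(6) wY a by (auto simp: proj_line_def)
  have bv: "pair3 b v = 0" using assms(5) vX b by (auto simp: proj_line_def)
  have bw: "pair3 b w = 0" using assms(7) wY b by (auto simp: proj_line_def)
  have np: "\<not>(\<exists>k. w$1 = k * v$1 \<and> w$2 = k * v$2 \<and> w$3 = k * v$3)"
  proof
    assume "\<exists>k. w$1 = k * v$1 \<and> w$2 = k * v$2 \<and> w$3 = k * v$3"
    then obtain k where k: "w = k *s v" by (auto simp: vec_eq_iff forall_3)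
    have k0: "k \<noteq> 0" using k w by auto
    have "X = Y"
    proof
      show "X \<subseteq> Y"
      proof
        fix x assume "x \<in> X"
        then obtain c where "x = c *s v" using v by auto
        then have "x = (c/k) *s w" using k k0 by (simp add: vector_smult_assoc)
        then show "x \<in> Y" using w by auto
      qed
      show "Y \<subseteq> X"
      proof
        fix x assume "x \<in> Y"
        then obtain c where "x = c *s w" using w by auto
        then have "x = (c*k) *s v" using k by (simp add: vector_smult_assoc)
        then show "x \<in> X" using v by auto
      qed
    qed
    with XY show False by simp
  qed
  obtain c where c: "a$1 = c * b$1 \<and> a$2 = c * b$2 \<and> a$3 = c * b$3"
    using alg[of "a$1" "v$1" "a$2" "v$2" "a$3" "v$3" "w$1" "w$2" "w$3" "b$1" "b$2" "b$3"]
      av aw bv bw np v(1) b(1) unfolding pair3_eq vec3_eq0 by blast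
  then have ac: "a = c *s b" by (auto simp: vec_eq_iff forall_3)
  then have c0: "c \<noteq> 0" using a by auto
  have "\<And>x. pair3 a x = c * pair3 b x" using ac by (simp add: pair3_eq algebra_simps)
  then have "proj_line a = proj_line b" using c0 unfolding proj_line_def by auto
  with a b assms(3) show False by simp
qed



definition lt :: "(complex^3) set set set \<Rightarrow> (complex^3) set \<Rightarrow> (complex^3) set set set" where
  "lt A X = {H \<in> A. X \<in> H}"

lemma arr_le: "B \<subseteq> A \<Longrightarrow> mult_pts A \<subseteq> \<Union>B \<Longrightarrow> arr_type A \<le> card B"
  unfolding arr_type_def by (rule Least_le) auto

lemma finish:
  assumes "H1\<in>A" "H2\<in>A" "H3\<in>A" "H1 \<noteq> H2" "H1 \<noteq> H3" "H2 \<noteq> H3"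
    "mult_pts A \<subseteq> H1 \<union> H2 \<union> H3"
    "(H1 \<inter> H2 \<inter> H3 = {} \<and> card (mult_pts A \<inter> (H1 - (H2 \<union> H3))) = 1)
          \<or> H1 \<inter> H2 \<inter> H3 \<noteq> {}"
  shows "C_le3_simple A"
proof -
  have "arr_type A \<le> card {H1,H2,H3}"
    using assms by (intro arr_le) auto
  also have "\<dots> = 3" using assms by simp
  finally have "arr_type A \<le> 3" .
  then show ?thesis unfolding C_le3_simple_def using assms by force
qed

lemma comb:
  fixes A :: "(complex^3) set set set"
  assumes fin: "finite A" and cA: "card A = 7"
    and inc: "\<And>L1 L2 X Y. L1\<in>A \<Longrightarrow> L2\<in>A \<Longrightarrow> L1\<noteq>L2 \<Longrightarrow> X\<in>L1 \<Longrightarrow> X\<in>L2 \<Longrightarrow> Y\<in>L1 \<Longrightarrow> Y\<in>L2 \<Longrightarrow> X=Y"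
  shows "C_le3_simple A"
proof -
  have ltfin: "\<And>X :: (complex^3) set. finite (lt A X)" using fin by (simp add: lt_def)
  have ltsub: "\<And>X :: (complex^3) set. lt A X \<subseteq> A" by (auto simp: lt_def)
  have lt_int: "\<And>X Y :: (complex^3) set. X \<noteq> Y \<Longrightarrow> card (lt A X \<inter> lt A Y) \<le> 1"
  proof -
    fix X Y :: "(complex^3) set" assume "X \<noteq> Y"
    have "\<forall>a1\<in>lt A X \<inter> lt A Y. \<forall>a2\<in>lt A X \<inter> lt A Y. a1 = a2"
    proof (intro ballI)
      fix a1 a2 assume h1: "a1 \<in> lt A X \<inter> lt A Y" and h2: "a2 \<in> lt A X \<inter> lt A Y"
      show "a1 = a2"
      proof (rule ccontr)
        assume "a1 \<noteq> a2"
        moreover have "a1 \<in> A" "a2 \<in> A" "X \<in> a1" "X \<in> a2" "Y \<in> a1" "Y \<in> a2"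
          using h1 h2 by (auto simp: lt_def)
        ultimately have "X = Y" using inc[of a1 a2 X Y] by blast
        with \<open>X \<noteq> Y\<close> show False by simp
      qed
    qed
    then show "card (lt A X \<inter> lt A Y) \<le> 1"
      using card_le_Suc0_iff_eq[of "lt A X \<inter> lt A Y"] ltfin by auto
  qed
  have multI: "\<And>X. X \<in> mult_pts A \<Longrightarrow> card (lt A X) \<ge> 3"
    by (auto simp: mult_pts_def lt_def)
  show ?thesis
  proof (cases "mult_pts A = {}")
    case True
    then have "arr_type A \<le> card ({}::(complex^3) set set set)" by (intro arr_le) auto
    then show ?thesis by (simp add: C_le3_simple_def)
  next
    case False
    then obtain P0 where "P0 \<in> mult_pts A" by blast
    moreover have "\<forall>y. y \<in> mult_pts A \<longrightarrow> card (lt A y) < 8"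
      by (intro allI impI, rule le_less_trans[OF card_mono[OF fin ltsub]]) (simp add: cA)
    ultimately obtain P where P: "P \<in> mult_pts A"
      and Pmax: "\<And>y. y \<in> mult_pts A \<Longrightarrow> card (lt A y) \<le> card (lt A P)"
      using ex_has_greatest_nat[of "\<lambda>X. X \<in> mult_pts A" P0 "\<lambda>X. card (lt A X)" 8] by blast
    define Pen where "Pen = lt A P"
    define S where "S = A - Pen"
    define r where "r = card Pen"
    have r3: "r \<ge> 3" using multI[OF P] by (simp add: r_def Pen_def)
    have finPen: "finite Pen" using ltfin by (simp add: Pen_def)
    have finS: "finite S" using fin by (simp add: S_def)
    have cS: "card S = 7 - r" unfolding S_def r_def using card_Diff_subset[OF finPen] ltsub cA
      by (simp add: Pen_def)
    have rle: "r \<le> 7" using card_mono[OF fin ltsub] cA by (simp add: r_def Pen_def)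
    have PinPen: "\<And>H. H \<in> Pen \<Longrightarrow> P \<in> H" by (simp add: Pen_def lt_def)
    have PenA: "Pen \<subseteq> A" by (simp add: Pen_def ltsub)
    have SA: "S \<subseteq> A" by (auto simp: S_def)
    have PnotS: "\<And>H. H \<in> S \<Longrightarrow> P \<notin> H" by (auto simp: S_def Pen_def lt_def)
    have RS2: "\<And>R. R \<in> mult_pts A \<Longrightarrow> R \<noteq> P \<Longrightarrow> card (lt A R \<inter> S) \<ge> 2"
    proof -
      fix R assume R: "R \<in> mult_pts A" "R \<noteq> P"
      have d: "lt A R = (lt A R \<inter> lt A P) \<union> (lt A R \<inter> S)" using ltsub by (auto simp: S_def Pen_def)
      have "card (lt A R) \<le> card (lt A R \<inter> lt A P) + card (lt A R \<inter> S)"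
        by (subst d) (rule card_Un_le)
      then show "card (lt A R \<inter> S) \<ge> 2" using lt_int[OF R(2)] multI[OF R(1)] by linarith
    qed
    show ?thesis
    proof (cases "\<exists>Q \<in> mult_pts A. \<forall>H\<in>Pen. Q \<notin> H")
      case noQ: False
      define Pen' where "Pen' = {H\<in>Pen. \<exists>R\<in>mult_pts A. R \<noteq> P \<and> R \<in> H}"
      have Pen'sub: "Pen' \<subseteq> Pen" by (auto simp: Pen'_def)
      have cPen': "card Pen' \<le> 3"
      proof (cases "r \<le> 3")
        case True
        then show ?thesis using card_mono[OF finPen Pen'sub] by (simp add: r_def)
      next
        case False
        then have cS3: "card S \<le> 3" using cS by simp
        define R where "R = (\<lambda>H. SOME R. R\<in>mult_pts A \<and> R \<noteq> P \<and> R \<in> H)"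
        have R: "\<And>H. H \<in> Pen' \<Longrightarrow> R H \<in> mult_pts A \<and> R H \<noteq> P \<and> R H \<in> H"
          unfolding R_def Pen'_def by (rule someI_ex) auto
        define T where "T = (\<lambda>H. SOME T. T \<subseteq> lt A (R H) \<inter> S \<and> card T = 2)"
        have T: "\<And>H. H \<in> Pen' \<Longrightarrow> T H \<subseteq> lt A (R H) \<inter> S \<and> card (T H) = 2"
        proof -
          fix H assume H: "H \<in> Pen'"
          have "card (lt A (R H) \<inter> S) \<ge> 2" using RS2 R[OF H] by blast
          then obtain U where "U \<subseteq> lt A (R H) \<inter> S" "card U = 2" "finite U"
            by (rule obtain_subset_with_card_n)
          then show "T H \<subseteq> lt A (R H) \<inter> S \<and> card (T H) = 2"
            unfolding T_def by (intro someI_ex[where P="\<lambda>T. T \<subseteq> lt A (R H) \<inter> S \<and> card T = 2"]) blast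
        qed
        have inj: "inj_on T Pen'"
        proof
          fix H1 H2 assume H1: "H1 \<in> Pen'" and H2: "H2 \<in> Pen'" and eq: "T H1 = T H2"
          have c2: "card (T H1) = 2" using T[OF H1] by blast
          then obtain L1 L2 where L: "T H1 = {L1, L2}" "L1 \<noteq> L2" unfolding card_2_iff by blast
          have sub1: "T H1 \<subseteq> lt A (R H1)" using T[OF H1] by blast
          have sub2: "T H1 \<subseteq> lt A (R H2)" using T[OF H2] eq by blast
          have "L1 \<in> lt A (R H1)" "L2 \<in> lt A (R H1)" "L1 \<in> lt A (R H2)" "L2 \<in> lt A (R H2)"
            using sub1 sub2 L(1) by auto
          then have "L1 \<in> A" "L2 \<in> A" "R H1 \<in> L1" "R H1 \<in> L2" "R H2 \<in> L1" "R H2 \<in> L2"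
            by (simp_all add: lt_def)
          then have RR: "R H1 = R H2" using inc[of L1 L2 "R H1" "R H2"] L(2) by blast
          show "H1 = H2"
          proof (rule ccontr)
            assume ne: "H1 \<noteq> H2"
            have "H1 \<in> A" "H2 \<in> A" using H1 H2 Pen'sub PenA by blast+
            moreover have "P \<in> H1" "P \<in> H2" using H1 H2 Pen'sub PinPen by blast+
            moreover have "R H1 \<in> H1" "R H1 \<in> H2" using R[OF H1] R[OF H2] RR by simp_all
            ultimately have "P = R H1" using inc[of H1 H2 P "R H1"] ne by blast
            then show False using R[OF H1] by simp
          qed
        qed
        have "T ` Pen' \<subseteq> {U. U \<subseteq> S \<and> card U = 2}" using T by auto
        then have "card Pen' \<le> card {U. U \<subseteq> S \<and> card U = 2}"
          proof (rule card_inj_on_le[OF inj])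
          show "finite {U. U \<subseteq> S \<and> card U = 2}"
            by (rule finite_subset[of _ "Pow S"]) (auto simp: finS)
        qed
        also have "\<dots> = card S choose 2" using n_subsets[OF finS] .
        also have "\<dots> \<le> 3"
        proof -
          have "card S \<in> {0,1,2,3}" using cS3 by auto
          then show ?thesis by (auto simp: choose_two)
        qed
        finally show ?thesis .
      qed
      have finPen'': "finite Pen'" using finPen Pen'sub by (rule finite_subset[rotated])
      have "3 - card Pen' \<le> card (Pen - Pen')"
        using card_Diff_subset[OF finPen'' Pen'sub] card_mono[OF finPen Pen'sub] r3 by (simp add: r_def)
      then obtain C where C: "C \<subseteq> Pen - Pen'" "card C = 3 - card Pen'" "finite C"
        by (rule obtain_subset_with_card_n)
      define B where "B = Pen' \<union> C"
      have finPen': "finite Pen'" by (rule finPen'')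
      have finC: "finite C" by (rule C(3))
      have cB: "card B = 3" unfolding B_def using card_Un_disjoint[OF finPen' finC] C cPen' by auto
      have BPen: "B \<subseteq> Pen" using Pen'sub C by (auto simp: B_def)
      from cB obtain H1 H2 H3 where B3: "B = {H1,H2,H3}" "H1 \<noteq> H2" "H2 \<noteq> H3" "H1 \<noteq> H3"
        unfolding card_3_iff by blast
      have cover: "mult_pts A \<subseteq> H1 \<union> H2 \<union> H3"
      proof
        fix X assume X: "X \<in> mult_pts A"
        show "X \<in> H1 \<union> H2 \<union> H3"
        proof (cases "X = P")
          case True
          then show ?thesis using BPen B3 PinPen by auto
        next
          case XP: False
          then obtain H where "H \<in> Pen" "X \<in> H" using X noQ by blast
          then have "H \<in> Pen'" using X XP by (auto simp: Pen'_def)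
          then have "H \<in> B" by (simp add: B_def)
          then show ?thesis using \<open>X \<in> H\<close> B3 by auto
        qed
      qed
      have hA: "H1 \<in> A" "H2 \<in> A" "H3 \<in> A" using B3(1) BPen PenA by auto
      have Pint: "P \<in> H1 \<inter> H2 \<inter> H3" using B3(1) BPen PinPen by auto
      then have "H1 \<inter> H2 \<inter> H3 \<noteq> {}" by blast
      then show ?thesis using finish[of H1 A H2 H3] hA B3(2-4) cover by blast
    next
      case True
      then obtain Q where Q: "Q \<in> mult_pts A" "\<And>H. H \<in> Pen \<Longrightarrow> Q \<notin> H" by blast
      have QS: "lt A Q \<subseteq> S" using Q by (auto simp: S_def lt_def)
      have "Pen \<noteq> {}" using r3 r_def by auto
      then obtain H0 where H0: "H0 \<in> Pen" by blast
      then have QP: "Q \<noteq> P" using Q(2) PinPen by blast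
      have cQ: "card (lt A Q) \<ge> 3" using multI[OF Q(1)] .
      have cQr: "card (lt A Q) \<le> r" using Pmax[OF Q(1)] by (simp add: r_def Pen_def)
      have cSQ: "card S \<ge> 3" using card_mono[OF finS QS] cQ by simp
      have uniq: "\<And>Q'. Q' \<in> mult_pts A \<Longrightarrow> \<forall>H\<in>Pen. Q' \<notin> H \<Longrightarrow> Q' = Q"
      proof (rule ccontr)
        fix Q' assume Q': "Q' \<in> mult_pts A" "\<forall>H\<in>Pen. Q' \<notin> H" and ne: "Q' \<noteq> Q"
        have QS': "lt A Q' \<subseteq> S" using Q' by (auto simp: S_def lt_def)
        have "card (lt A Q \<union> lt A Q') + card (lt A Q \<inter> lt A Q') = card (lt A Q) + card (lt A Q')"
          using card_Un_Int[OF ltfin ltfin] by simp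
        moreover have "card (lt A Q \<inter> lt A Q') \<le> 1" using lt_int ne by blast
        moreover have "card (lt A Q \<union> lt A Q') \<le> card S" using card_mono[OF finS] QS QS' by simp
        moreover have "card (lt A Q') \<ge> 3" using multI[OF Q'(1)] .
        ultimately show False using cQ cS r3 by linarith
      qed
      have onpen: "\<And>R. R \<in> mult_pts A \<Longrightarrow> R \<noteq> Q \<Longrightarrow> \<exists>H\<in>Pen. R \<in> H"
        using uniq by blast
      have "r = 3 \<or> r = 4" using cSQ cS r3 by linarith
      then show ?thesis
      proof
        assume r4: "r = 4"
        have "card (lt A Q) = card S" using card_mono[OF finS QS] cQ cS r4 by linarith
        then have "lt A Q = S" using card_subset_eq[OF finS QS] by blast
        then have sub: "mult_pts A \<subseteq> {P, Q}"
        proof -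
          assume LQ: "lt A Q = S"
          show ?thesis
          proof
            fix R assume R: "R \<in> mult_pts A"
            show "R \<in> {P,Q}"
            proof (rule ccontr)
              assume "R \<notin> {P,Q}"
              then have RP: "R \<noteq> P" and RQ: "R \<noteq> Q" by auto
              have c1: "card (lt A R \<inter> S) \<ge> 2" using RS2[OF R RP] .
              have c2: "card (lt A R \<inter> lt A Q) \<le> 1" using lt_int[OF RQ] .
              from c1 have "card (lt A R \<inter> lt A Q) \<ge> 2" by (simp only: LQ)
              with c2 show False by linarith
            qed
          qed
        qed
        obtain HP where HP: "HP \<in> Pen" using H0 by blast
        have "lt A Q \<noteq> {}" using cQ by (metis card.empty not_numeral_le_zero)
        then obtain HQ where HQ: "HQ \<in> lt A Q" by blast
        have HPA: "HP \<in> A" using HP PenA by blast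
        have HQA: "HQ \<in> A" "Q \<in> HQ" using HQ by (simp_all add: lt_def)
        have PHP: "P \<in> HP" using HP PinPen by blast
        have "arr_type A \<le> card {HP, HQ}"
        proof (rule arr_le)
          show "{HP, HQ} \<subseteq> A" using HPA HQA by blast
          show "mult_pts A \<subseteq> \<Union> {HP, HQ}" using sub PHP HQA(2) by blast
        qed
        also have "\<dots> \<le> 2" by (cases "HP = HQ") auto
        finally show ?thesis by (simp add: C_le3_simple_def)
      next
        assume r3': "r = 3"
        have cQ3: "card (lt A Q) = 3" using cQ cQr r3' by simp
        have "card (S - lt A Q) = 1" using card_Diff_subset[OF ltfin QS] cQ3 cS r3' by simp
        then obtain l where l: "S - lt A Q = {l}" by (rule card_1_singletonE)
        have lS: "l \<in> S" and lQ: "Q \<notin> l" using l by (auto simp: lt_def S_def)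
        have Sd: "S = lt A Q \<union> {l}" using l QS by auto
        have sub: "\<And>R. R \<in> mult_pts A \<Longrightarrow> R \<noteq> P \<Longrightarrow> R \<noteq> Q \<Longrightarrow> R \<in> l"
        proof (rule ccontr)
          fix R assume R: "R \<in> mult_pts A" "R \<noteq> P" "R \<noteq> Q" "R \<notin> l"
          have "lt A R \<inter> S \<subseteq> lt A R \<inter> lt A Q" using R(4) Sd by (auto simp: lt_def)
          then have "card (lt A R \<inter> S) \<le> card (lt A R \<inter> lt A Q)"
            using ltfin by (simp add: card_mono)
          then show False using RS2[OF R(1,2)] lt_int[OF R(3)] by linarith
        qed
        obtain H1 where H1: "H1 \<in> Pen" using H0 by blast
        have H1l: "H1 \<noteq> l" using H1 lS by (auto simp: S_def)
        have "\<exists>H3\<in>lt A Q. H1 \<inter> l \<inter> H3 = {}"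
        proof (rule ccontr)
          assume "\<not> ?thesis"
          then have all: "\<And>K. K \<in> lt A Q \<Longrightarrow> \<exists>X. X \<in> H1 \<inter> l \<inter> K" by blast
          from cQ3 obtain K1 K2 K3 where K0: "lt A Q = {K1,K2,K3}" "K1 \<noteq> K2"
            unfolding card_3_iff by blast
          then have K: "K1 \<in> lt A Q" "K2 \<in> lt A Q" "K1 \<noteq> K2" by auto
          obtain X1 where X1: "X1 \<in> H1 \<inter> l \<inter> K1" using all K by blast
          obtain X2 where X2: "X2 \<in> H1 \<inter> l \<inter> K2" using all K by blast
          have H1A: "H1 \<in> A" using H1 PenA by blast
          have lA: "l \<in> A" using lS SA by blast
          have "X1 = X2" using inc[of H1 l X1 X2] X1 X2 H1A lA H1l by blast
          moreover have "K1 \<in> A" "K2 \<in> A" "Q \<in> K1" "Q \<in> K2" using K by (simp_all add: lt_def)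
          ultimately have "X1 = Q" using inc[of K1 K2 X1 Q] X1 X2 K(3) by blast
          then show False using X1 lQ by auto
        qed
        then obtain H3 where H3: "H3 \<in> lt A Q" "H1 \<inter> l \<inter> H3 = {}" by blast
        have H3S: "H3 \<in> S" using H3 QS by auto
        have mset: "mult_pts A \<inter> (H1 - (l \<union> H3)) = {P}"
        proof
          show "{P} \<subseteq> mult_pts A \<inter> (H1 - (l \<union> H3))"
            using P H1 PinPen PnotS lS H3S by auto
          show "mult_pts A \<inter> (H1 - (l \<union> H3)) \<subseteq> {P}"
          proof
            fix R assume R: "R \<in> mult_pts A \<inter> (H1 - (l \<union> H3))"
            then have "R \<noteq> Q" using Q(2) H1 by auto
            then show "R \<in> {P}" using sub R by auto
          qed
        qed
        have hA: "H1 \<in> A" "l \<in> A" "H3 \<in> A" using H1 PenA lS SA H3S by auto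
        have d13: "H1 \<noteq> H3" using H1 H3S by (auto simp: S_def)
        have dl3: "l \<noteq> H3" using l H3(1) by auto
        have QH3: "Q \<in> H3" using H3(1) by (simp add: lt_def)
        have PH1: "P \<in> H1" using H1 PinPen by blast
        have cover: "mult_pts A \<subseteq> H1 \<union> l \<union> H3"
        proof
          fix R assume R: "R \<in> mult_pts A"
          show "R \<in> H1 \<union> l \<union> H3"
          proof (cases "R = P")
            case True then show ?thesis using PH1 by blast
          next
            case False
            show ?thesis
            proof (cases "R = Q")
              case True then show ?thesis using QH3 by blast
            next
              case False
              then show ?thesis using sub[OF R \<open>R \<noteq> P\<close>] by blast
            qed
          qed
        qed
        have "card (mult_pts A \<inter> (H1 - (l \<union> H3))) = 1" using mset by simp
        then show ?thesis using finish[of H1 A l H3] hA H1l d13 dl3 cover H3(2) by blast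
      qed
    qed
  qed
qed


theorem mainTheorem12:
  assumes "line_arrangement A" and "card A = 7"
  shows "C_le3_simple A"
proof (rule comb)
  show "finite A" using assms(1) by (simp add: line_arrangement_def)
  show "card A = 7" by (rule assms(2))
  fix L1 L2 X Y assume "L1 \<in> A" "L2 \<in> A" "L1 \<noteq> L2" "X \<in> L1" "X \<in> L2" "Y \<in> L1" "Y \<in> L2"
  moreover have "is_proj_line L1" "is_proj_line L2"
    using assms(1) \<open>L1 \<in> A\<close> \<open>L2 \<in> A\<close> by (auto simp: line_arrangement_def)
  ultimately show "X = Y" using incidence[of L1 L2 X Y] by blast
qed

end
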